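(* Let $\mathcal G=(V,E,r)$ be a graph. If $a\in\mathbf A(\mathcal G)$ and $\operatorname{supp}(a)$ is acyclic, then $\mathsf L(a)=\{l\}$ with $l=\sum_{v\in V}a(v)-\sum_{e\in E}a(e)$. In particular $|\mathsf L(a)|=1$.
   Context: A graph $\mathcal G=(V,E,r)$ consists of a finite vertex set $V$, a finite edge set $E$ disjoint from $V$, and a map $r$ assigning to each edge a two-element subset of $V$; multiple edges allowed, no loops. Acyclic means containing no cycle, where two edges with the same pair of endpoints form a cycle of length $2$. An agglomeration on $\mathcal G$ is a function $a\colon V\cup E\to\mathbb N_0$ with $a(v)\ge a(e)$ whenever $v$ is incident with $e$; $\mathbf A(\mathcal G)$ is the monoid of agglomerations under pointwise addition. $\operatorname{supp}(a)$ is the subgraph of vertices and edges where $a$ is positive. $\mathsf L(a)$ is the set of $n\in\mathbb N_0$ such that $a$ is a sum of $n$ atoms (nonzero elements not expressible as a sum of two nonzero elements), with $\mathsf L(0)=\{0\}$. *)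

theory Defs
  imports Main "HOL-Library.Function_Algebras"
begin

text \<open>A graph (V,E,r): finite disjoint vertex and edge sets, r maps each edge
  to a two-element set of vertices (multiple edges allowed, no loops).\<close>
definition is_graph :: "'a set \<Rightarrow> 'a set \<Rightarrow> ('a \<Rightarrow> 'a set) \<Rightarrow> bool" where
  "is_graph V E r \<longleftrightarrow> finite V \<and> finite E \<and> V \<inter> E = {} \<and>
     (\<forall>e\<in>E. r e \<subseteq> V \<and> card (r e) = 2)"

definition agglomerations :: "'a set \<Rightarrow> 'a set \<Rightarrow> ('a \<Rightarrow> 'a set) \<Rightarrow> ('a \<Rightarrow> nat) set" where
  "agglomerations V E r = {a. (\<forall>x. x \<notin> V \<union> E \<longrightarrow> a x = 0) \<and>
     (\<forall>e\<in>E. \<forall>v\<in>r e. a e \<le> a v)}"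

definition agg_atom :: "'a set \<Rightarrow> 'a set \<Rightarrow> ('a \<Rightarrow> 'a set) \<Rightarrow> ('a \<Rightarrow> nat) \<Rightarrow> bool" where
  "agg_atom V E r u \<longleftrightarrow> u \<in> agglomerations V E r \<and> u \<noteq> 0 \<and>
     \<not> (\<exists>b\<in>agglomerations V E r. \<exists>c\<in>agglomerations V E r. b \<noteq> 0 \<and> c \<noteq> 0 \<and> u = b + c)"

definition agg_lengths :: "'a set \<Rightarrow> 'a set \<Rightarrow> ('a \<Rightarrow> 'a set) \<Rightarrow> ('a \<Rightarrow> nat) \<Rightarrow> nat set" where
  "agg_lengths V E r a = {n. \<exists>f :: nat \<Rightarrow> 'a \<Rightarrow> nat.
     (\<forall>i<n. agg_atom V E r (f i)) \<and> a = (\<Sum>i<n. f i)}"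

text \<open>supp(a) contains a cycle: k \<ge> 2 distinct vertices v_0..v_{k-1} and k distinct
  edges e_0..e_{k-1} of the support with r e_i = {v_i, v_{(i+1) mod k}}.
  (For k = 2 this is a pair of parallel edges.)\<close>
definition supp_has_cycle :: "'a set \<Rightarrow> 'a set \<Rightarrow> ('a \<Rightarrow> 'a set) \<Rightarrow> ('a \<Rightarrow> nat) \<Rightarrow> bool" where
  "supp_has_cycle V E r a \<longleftrightarrow> (\<exists>vs es. length vs = length es \<and> length vs \<ge> 2 \<and>
     distinct vs \<and> distinct es \<and> set vs \<subseteq> V \<and> set es \<subseteq> E \<and>
     (\<forall>v\<in>set vs. a v > 0) \<and> (\<forall>e\<in>set es. a e > 0) \<and>
     (\<forall>i<length es. r (es ! i) = {vs ! i, vs ! ((i + 1) mod length vs)}))"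

definition supp_acyclic :: "'a set \<Rightarrow> 'a set \<Rightarrow> ('a \<Rightarrow> 'a set) \<Rightarrow> ('a \<Rightarrow> nat) \<Rightarrow> bool" where
  "supp_acyclic V E r a \<longleftrightarrow> \<not> supp_has_cycle V E r a"

end

theory Submission
  imports Defs
begin

lemma agg_zero: "b \<in> agglomerations V E r \<Longrightarrow> x \<notin> V \<union> E \<Longrightarrow> b x = 0"
  by (simp add: agglomerations_def)

lemma agg_le: "b \<in> agglomerations V E r \<Longrightarrow> e \<in> E \<Longrightarrow> v \<in> r e \<Longrightarrow> b e \<le> b v"
  by (simp add: agglomerations_def)

lemma cycle_mono:
  assumes "\<forall>x. b x \<le> a x" and "supp_has_cycle V E r b"
  shows "supp_has_cycle V E r a"
proof -
  from assms(2) obtain vs es where h: "length vs = length es \<and> length vs \<ge> 2 \<and>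
     distinct vs \<and> distinct es \<and> set vs \<subseteq> V \<and> set es \<subseteq> E \<and>
     (\<forall>v\<in>set vs. b v > 0) \<and> (\<forall>e\<in>set es. b e > 0) \<and>
     (\<forall>i<length es. r (es ! i) = {vs ! i, vs ! ((i + 1) mod length vs)})"
    unfolding supp_has_cycle_def by blast
  have "(\<forall>v\<in>set vs. a v > 0) \<and> (\<forall>e\<in>set es. a e > 0)"
    using h assms(1) by (meson less_le_trans)
  then show ?thesis unfolding supp_has_cycle_def using h by blast
qed

lemma path_leaf:
  assumes G: "is_graph V E r" and A: "b \<in> agglomerations V E r"
    and C: "\<not> supp_has_cycle V E r b"
  shows "length vs = Suc (length es) \<Longrightarrow> es \<noteq> [] \<Longrightarrow> distinct vs \<Longrightarrow> distinct es \<Longrightarrow>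
    set vs \<subseteq> V \<Longrightarrow> set es \<subseteq> E \<Longrightarrow> (\<forall>x\<in>set vs. 0 < b x) \<Longrightarrow> (\<forall>e\<in>set es. 0 < b e) \<Longrightarrow>
    (\<forall>i<length es. r (es!i) = {vs!i, vs!Suc i}) \<Longrightarrow>
    \<exists>v e. e \<in> E \<and> 0 < b e \<and> v \<in> r e \<and> (\<forall>f\<in>E. 0 < b f \<and> v \<in> r f \<longrightarrow> f = e)"
proof (induction "card V - length vs" arbitrary: vs es rule: less_induct)
  case less
  have finV: "finite V" using G by (simp add: is_graph_def)
  define t where "t = vs!0"
  define e1 where "e1 = es!0"
  have e1E: "e1 \<in> E" and e1b: "0 < b e1" and te1: "t \<in> r e1"
    using less.prems unfolding e1_def t_def by auto
  show ?case
  proof (cases "\<forall>f\<in>E. 0 < b f \<and> t \<in> r f \<longrightarrow> f = e1")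
    case True
    then show ?thesis using e1E e1b te1 by blast
  next
    case False
    then obtain f where fE: "f \<in> E" and fb: "0 < b f" and tf: "t \<in> r f" and fne: "f \<noteq> e1"
      by blast
    have "card (r f) = 2" "r f \<subseteq> V" using G fE by (auto simp: is_graph_def)
    then obtain z where rf: "r f = {t, z}" and zt: "z \<noteq> t" and zV: "z \<in> V"
      using tf by (auto simp: card_2_iff) (metis insert_commute)
    have zb: "0 < b z" using agg_le[OF A fE, of z] rf fb by auto
    have fnes: "f \<notin> set es"
    proof
      assume "f \<in> set es"
      then obtain i where i: "i < length es" "es!i = f" by (auto simp: in_set_conv_nth)
      have "i \<noteq> 0" using i fne e1_def by (metis)
      have "t \<in> {vs!i, vs!Suc i}" using less.prems(9) i tf by metis
      then have "vs!0 = vs!i \<or> vs!0 = vs!Suc i" using t_def by auto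
      moreover have "vs!0 \<noteq> vs!i" "vs!0 \<noteq> vs!Suc i"
        using nth_eq_iff_index_eq[OF less.prems(3)] \<open>i \<noteq> 0\<close> i less.prems(1) by auto
      ultimately show False by blast
    qed
    show ?thesis
    proof (cases "z \<in> set vs")
      case False
      have "card (set vs) < card V"
        using False zV less.prems(5) finV by (metis psubsetI psubset_card_mono)
      then have lt: "card V - length (z#vs) < card V - length vs"
        using distinct_card[OF less.prems(3)] by simp
      show ?thesis
      proof (rule less.hyps[OF lt, of "f#es"])
        show "\<forall>i<length (f # es). r ((f # es) ! i) = {(z # vs) ! i, (z # vs) ! Suc i}"
        proof (intro allI impI)
          fix i assume "i < length (f#es)"
          then show "r ((f # es) ! i) = {(z # vs) ! i, (z # vs) ! Suc i}"
            using less.prems(9) rf t_def by (cases i) auto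
        qed
      qed (use less.prems False fnes fE fb zV zb in auto)
    next
      case True
      then obtain j where j: "j < length vs" "vs!j = z" by (auto simp: in_set_conv_nth)
      have j0: "j \<noteq> 0" using j zt t_def by metis
      define vs' where "vs' = take (Suc j) vs"
      define es' where "es' = take j es @ [f]"
      have lv: "length vs' = Suc j" using j vs'_def by simp
      have le: "length es' = Suc j" using j less.prems(1) es'_def by simp
      have "supp_has_cycle V E r b"
        unfolding supp_has_cycle_def
      proof (intro exI conjI)
        show "length vs' = length es'" using lv le by simp
        show "2 \<le> length vs'" using lv j0 by simp
        show "distinct vs'" using less.prems(3) vs'_def by simp
        show "distinct es'" using less.prems(4) fnes es'_def
          by (auto dest: in_set_takeD)
        show "set vs' \<subseteq> V" using less.prems(5) vs'_def by (meson order_trans set_take_subset)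
        show "set es' \<subseteq> E" using less.prems(6) es'_def fE by (auto dest: in_set_takeD)
        show "\<forall>v\<in>set vs'. 0 < b v" using less.prems(7) vs'_def by (auto dest: in_set_takeD)
        show "\<forall>e\<in>set es'. 0 < b e" using less.prems(8) es'_def fb by (auto dest: in_set_takeD)
        show "\<forall>i<length es'. r (es' ! i) = {vs' ! i, vs' ! ((i + 1) mod length vs')}"
        proof (intro allI impI)
          fix i assume i: "i < length es'"
          show "r (es' ! i) = {vs' ! i, vs' ! ((i + 1) mod length vs')}"
          proof (cases "i < j")
            case True
            then have "es'!i = es!i" using es'_def j less.prems(1) by (simp add: nth_append)
            moreover have "(i + 1) mod length vs' = Suc i" using lv True by simp
            moreover have "i < length es" using True j less.prems(1) by simp
            ultimately show ?thesis using less.prems(9) vs'_def True by simp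
          next
            case False
            then have ij: "i = j" using i le by simp
            then have "es'!i = f" using es'_def j less.prems(1) by (simp add: nth_append)
            moreover have "(i + 1) mod length vs' = 0" using lv ij by simp
            ultimately show ?thesis using rf vs'_def ij j t_def by auto
          qed
        qed
      qed
      then show ?thesis using C by blast
    qed
  qed
qed

definition phi :: "'a set \<Rightarrow> 'a set \<Rightarrow> ('a \<Rightarrow> nat) \<Rightarrow> int" where
  "phi V E b = (\<Sum>v\<in>V. int (b v)) - (\<Sum>e\<in>E. int (b e))"

lemma find_leaf:
  assumes G: "is_graph V E r" and A: "b \<in> agglomerations V E r"
    and C: "\<not> supp_has_cycle V E r b" and e0: "e0 \<in> E" "0 < b e0"
  shows "\<exists>v e. e \<in> E \<and> 0 < b e \<and> v \<in> r e \<and> (\<forall>f\<in>E. 0 < b f \<and> v \<in> r f \<longrightarrow> f = e)"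
proof -
  have "card (r e0) = 2" "r e0 \<subseteq> V" using G e0 by (auto simp: is_graph_def)
  then obtain x y where xy: "r e0 = {x, y}" "x \<noteq> y" "x \<in> V" "y \<in> V"
    by (auto simp: card_2_iff)
  have "0 < b x" "0 < b y" using agg_le[OF A e0(1)] xy e0(2) by (metis insertI1 insertI2 less_le_trans singletonI)+
  then show ?thesis
    using path_leaf[OF G A C, of "[x,y]" "[e0]"] xy e0 by auto
qed

lemma M:
  assumes G: "is_graph V E r"
  shows "b \<in> agglomerations V E r \<Longrightarrow> b \<noteq> 0 \<Longrightarrow> \<not> supp_has_cycle V E r b \<Longrightarrow>
    phi V E b \<ge> 1 \<and> (phi V E b \<ge> 2 \<longrightarrow> (\<exists>c\<in>agglomerations V E r. \<exists>d\<in>agglomerations V E r.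
        c \<noteq> 0 \<and> d \<noteq> 0 \<and> b = c + d))"
proof (induction "card {e\<in>E. 0 < b e}" arbitrary: b rule: less_induct)
  case less
  have finV: "finite V" and finE: "finite E" and disj: "V \<inter> E = {}"
    using G by (auto simp: is_graph_def)
  note A = less.prems(1)
  show ?case
  proof (cases "{e\<in>E. 0 < b e} = {}")
    case True
    then have bE: "\<forall>e\<in>E. b e = 0" by auto
    obtain x where bx: "b x \<noteq> 0" using less.prems(2) by (auto simp: fun_eq_iff)
    have xV: "x \<in> V" using bx bE agg_zero[OF A, of x] by (metis Un_iff)
    have ph: "phi V E b = (\<Sum>v\<in>V. int (b v))" using bE by (simp add: phi_def)
    have "int (b x) \<le> (\<Sum>v\<in>V. int (b v))" by (rule member_le_sum[OF xV]) (auto simp: finV)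
    then have ge1: "phi V E b \<ge> 1" using bx ph by simp
    define c :: "'a \<Rightarrow> nat" where "c = (\<lambda>y. if y = x then 1 else 0)"
    define d where "d = (\<lambda>y. b y - c y)"
    have xE: "x \<notin> E" using xV disj by auto
    have cA: "c \<in> agglomerations V E r" using xV xE unfolding c_def agglomerations_def by auto
    have dA: "d \<in> agglomerations V E r" using A bE unfolding d_def agglomerations_def by auto
    have bcd: "b = c + d" using bx unfolding c_def d_def by (auto simp: fun_eq_iff)
    have c0: "c \<noteq> 0" unfolding c_def by (auto simp: fun_eq_iff)
    have "d \<noteq> 0" if "phi V E b \<ge> 2"
    proof
      assume "d = 0"
      then have "b = c" using bcd by simp
      then have "(\<Sum>v\<in>V. int (b v)) = 1" using xV finV unfolding c_def by (simp add: if_distrib[of int] sum.delta cong: if_cong)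
      then show False using that ph by simp
    qed
    then show ?thesis using ge1 cA dA c0 bcd by blast
  next
    case False
    then obtain e0 where "e0 \<in> E" "0 < b e0" by auto
    then obtain v e where eE: "e \<in> E" and be: "0 < b e" and ve: "v \<in> r e"
      and leaf: "\<forall>f\<in>E. 0 < b f \<and> v \<in> r f \<longrightarrow> f = e"
      using find_leaf[OF G A less.prems(3)] by blast
    have "card (r e) = 2" "r e \<subseteq> V" using G eE by (auto simp: is_graph_def)
    then obtain w where re: "r e = {v, w}" and wv: "w \<noteq> v" and wV: "w \<in> V" and vV: "v \<in> V"
      using ve by (auto simp: card_2_iff) (metis insert_commute)
    have vE: "v \<noteq> e" "w \<noteq> e" using vV wV eE disj by auto
    have bev: "b e \<le> b v" "b e \<le> b w" using agg_le[OF A eE] re by auto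
    define b' where "b' = b(v := b v - b e, e := 0)"
    have b'A: "b' \<in> agglomerations V E r"
      unfolding agglomerations_def
    proof (intro CollectI conjI allI impI ballI)
      fix y assume "y \<notin> V \<union> E" then show "b' y = 0" using agg_zero[OF A] vV eE unfolding b'_def by auto
    next
      fix f u assume f: "f \<in> E" and u: "u \<in> r f"
      have uV: "u \<in> V" using G f u by (auto simp: is_graph_def)
      show "b' f \<le> b' u"
      proof (cases "f = e")
        case True then show ?thesis unfolding b'_def by simp
      next
        case False
        then have "b' f = b f" using vE f vV disj unfolding b'_def by auto
        moreover have "b f \<le> b' u"
        proof (cases "u = v")
          case True
          then have "b f = 0" using leaf f u False by auto
          then show ?thesis by simp
        next
          case False
          then have "b' u = b u" using uV eE disj unfolding b'_def by auto
          then show ?thesis using agg_le[OF A f u] by simp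
        qed
        ultimately show ?thesis by simp
      qed
    qed
    have b'le: "\<forall>x. b' x \<le> b x" unfolding b'_def by auto
    have b'C: "\<not> supp_has_cycle V E r b'" using cycle_mono[OF b'le] less.prems(3) by blast
    have b'w: "b' w = b w" using wv vE unfolding b'_def by auto
    have b'0: "b' \<noteq> 0" using b'w bev be by (auto simp: fun_eq_iff) (metis less_le_trans)
    have sub: "{f\<in>E. 0 < b' f} \<subseteq> {f\<in>E. 0 < b f} - {e}"
      using b'le unfolding b'_def by auto
    have "card {f\<in>E. 0 < b' f} < card {f\<in>E. 0 < b f}"
    proof -
      have "card {f\<in>E. 0 < b' f} \<le> card ({f\<in>E. 0 < b f} - {e})"
        using sub finE by (intro card_mono) auto
      also have "\<dots> < card {f\<in>E. 0 < b f}"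
        using eE be finE by (intro card_Diff1_less) auto
      finally show ?thesis .
    qed
    note IH = less.hyps[OF this b'A b'0 b'C]
    have sV: "(\<Sum>x\<in>V. int (b' x)) = (\<Sum>x\<in>V. int (b x)) - int (b e)"
    proof -
      have "(\<Sum>x\<in>V. int (b' x)) = (\<Sum>x\<in>V. int (b x) - (if x = v then int (b e) else 0))"
        using bev vE disj eE by (intro sum.cong) (auto simp: b'_def)
      also have "\<dots> = (\<Sum>x\<in>V. int (b x)) - int (b e)"
        using finV vV by (simp add: sum_subtractf sum.delta)
      finally show ?thesis .
    qed
    have sE: "(\<Sum>x\<in>E. int (b' x)) = (\<Sum>x\<in>E. int (b x)) - int (b e)"
    proof -
      have "(\<Sum>x\<in>E. int (b' x)) = (\<Sum>x\<in>E. int (b x) - (if x = e then int (b e) else 0))"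
        using vV disj by (intro sum.cong) (auto simp: b'_def)
      also have "\<dots> = (\<Sum>x\<in>E. int (b x)) - int (b e)"
        using finE eE by (simp add: sum_subtractf sum.delta)
      finally show ?thesis .
    qed
    have phieq: "phi V E b' = phi V E b" unfolding phi_def using sV sE by simp
    have split: "\<exists>c\<in>agglomerations V E r. \<exists>d\<in>agglomerations V E r. c \<noteq> 0 \<and> d \<noteq> 0 \<and> b = c + d"
      if ph2: "phi V E b \<ge> 2"
    proof -
      obtain c' d' where c'A: "c' \<in> agglomerations V E r" and d'A: "d' \<in> agglomerations V E r"
        and c'0: "c' \<noteq> 0" and d'0: "d' \<noteq> 0" and bcd': "b' = c' + d'"
        using IH phieq ph2 by auto
      have pt: "\<And>x. b' x = c' x + d' x" using bcd' by simp
      have c'e: "c' e = 0" "d' e = 0" using pt[of e] unfolding b'_def by auto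
      define m where "m = min (b e) (c' w)"
      define c where "c = c'(v := c' v + m, e := m)"
      define d where "d = d'(v := d' v + (b e - m), e := b e - m)"
      have bcd: "b = c + d"
      proof (rule ext)
        fix x
        show "b x = (c + d) x"
          using pt[of x] pt[of v] bev vE unfolding c_def d_def b'_def m_def
          by (cases "x = e"; cases "x = v") auto
      qed
      have cge: "\<forall>x. c' x \<le> c x" "\<forall>x. d' x \<le> d x" using c'e unfolding c_def d_def by auto
      have c0: "c \<noteq> 0" using c'0 cge by (auto simp: fun_eq_iff) (metis less_le_trans)
      have d0: "d \<noteq> 0" using d'0 cge by (auto simp: fun_eq_iff) (metis less_le_trans)
      have cw: "c w = c' w" "d w = d' w" using wv vE unfolding c_def d_def by auto
      have dm: "b e - m \<le> d' w" using pt[of w] b'w bev unfolding m_def by auto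
      have cA: "c \<in> agglomerations V E r"
        unfolding agglomerations_def
      proof (intro CollectI conjI allI impI ballI)
        fix y assume "y \<notin> V \<union> E" then show "c y = 0" using agg_zero[OF c'A] vV eE unfolding c_def by auto
      next
        fix f u assume f: "f \<in> E" and u: "u \<in> r f"
        show "c f \<le> c u"
        proof (cases "f = e")
          case True
          then have "u = v \<or> u = w" using u re by auto
          then show ?thesis using True cw vE unfolding c_def m_def by auto
        next
          case False
          have "c f = c' f" using False f vV disj unfolding c_def by auto
          moreover have "c' f \<le> c' u" using agg_le[OF c'A f u] .
          ultimately show ?thesis using cge by (metis order_trans)
        qed
      qed
      have dA: "d \<in> agglomerations V E r"
        unfolding agglomerations_def
      proof (intro CollectI conjI allI impI ballI)
        fix y assume "y \<notin> V \<union> E" then show "d y = 0" using agg_zero[OF d'A] vV eE unfolding d_def by auto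
      next
        fix f u assume f: "f \<in> E" and u: "u \<in> r f"
        show "d f \<le> d u"
        proof (cases "f = e")
          case True
          then have "u = v \<or> u = w" using u re by auto
          then show ?thesis using True cw dm vE unfolding d_def by auto
        next
          case False
          have "d f = d' f" using False f vV disj unfolding d_def by auto
          moreover have "d' f \<le> d' u" using agg_le[OF d'A f u] .
          ultimately show ?thesis using cge by (metis order_trans)
        qed
      qed
      show ?thesis using cA dA c0 d0 bcd by blast
    qed
    show ?thesis using IH phieq split by auto
  qed
qed

lemma sum_fun_apply: "(\<Sum>i<(n::nat). f i) x = (\<Sum>i<n. (f i) x :: nat)"
  by (induction n) auto

lemma phi_add: "phi V E (b + c) = phi V E b + phi V E c"
  unfolding phi_def by (simp add: sum.distrib)

lemma phi_sum: "phi V E (\<Sum>i<(n::nat). f i) = (\<Sum>i<n. phi V E (f i))"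
proof (induction n)
  case 0 then show ?case by (simp add: phi_def)
next
  case (Suc n) then show ?case by (simp only: sum.lessThan_Suc phi_add)
qed

lemma sum_split_nat: "(\<Sum>i<n1+n2. g i) = (\<Sum>i<n1. g i) + (\<Sum>i<n2. g (n1 + i :: nat) :: 'b::comm_monoid_add)"
  by (induction n2) (auto simp: add.assoc)

lemma exists_decomp:
  assumes G: "is_graph V E r"
  shows "b \<in> agglomerations V E r \<Longrightarrow> \<exists>(n::nat) f. (\<forall>i<n. agg_atom V E r (f i)) \<and> b = (\<Sum>i<n. f i)"
proof (induction "\<Sum>x\<in>V\<union>E. b x" arbitrary: b rule: less_induct)
  case less
  have fin: "finite (V \<union> E)" using G by (simp add: is_graph_def)
  show ?case
  proof (cases "b = 0")
    case True
    have "b = (\<Sum>i<(0::nat). (\<lambda>_. b) i)" using True by simp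
    then show ?thesis by (metis less_nat_zero_code)
  next
    case False
    show ?thesis
    proof (cases "agg_atom V E r b")
      case True
      have "b = (\<Sum>i<(1::nat). (\<lambda>_. b) i)" by simp
      moreover have "\<forall>i<(1::nat). agg_atom V E r ((\<lambda>_. b) i)" using True by simp
      ultimately show ?thesis by (intro exI[of _ "1::nat"] exI[of _ "\<lambda>_. b"] conjI)
    next
      case notat: False
      then obtain c d where cA: "c \<in> agglomerations V E r" and dA: "d \<in> agglomerations V E r"
        and c0: "c \<noteq> 0" and d0: "d \<noteq> 0" and bcd: "b = c + d"
        using False less.prems unfolding agg_atom_def by blast
      have smaller: "(\<Sum>x\<in>V\<union>E. c x) < (\<Sum>x\<in>V\<union>E. b x)" if cA: "c \<in> agglomerations V E r"
        and dA: "d \<in> agglomerations V E r" and d0: "d \<noteq> 0" and bcd: "b = c + d" for c d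
      proof -
        obtain x where dx: "d x \<noteq> 0" using d0 by (auto simp: fun_eq_iff)
        have xVE: "x \<in> V \<union> E" using agg_zero[OF dA, of x] dx by blast
        have "d x \<le> (\<Sum>x\<in>V\<union>E. d x)" by (rule member_le_sum[OF xVE]) (use fin in auto)
        moreover have "(\<Sum>x\<in>V\<union>E. b x) = (\<Sum>x\<in>V\<union>E. c x) + (\<Sum>x\<in>V\<union>E. d x)"
          using bcd by (simp add: sum.distrib)
        ultimately show ?thesis using dx by simp
      qed
      obtain n1 :: nat and f1 where f1: "\<forall>i<n1. agg_atom V E r (f1 i)" "c = (\<Sum>i<n1. f1 i)"
        using less.hyps[OF smaller[OF cA dA d0 bcd] cA] by blast
      obtain n2 :: nat and f2 where f2: "\<forall>i<n2. agg_atom V E r (f2 i)" "d = (\<Sum>i<n2. f2 i)"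
        using less.hyps[OF smaller[OF dA cA c0] dA] bcd by (metis add.commute)
      define g where "g = (\<lambda>i. if i < n1 then f1 i else f2 (i - n1))"
      have "(\<Sum>i<n1+n2. g i) = (\<Sum>i<n1. g i) + (\<Sum>i<n2. g (n1 + i))" by (rule sum_split_nat)
      also have "\<dots> = c + d" using f1 f2 unfolding g_def by simp
      finally have "b = (\<Sum>i<n1+n2. g i)" using bcd by simp
      moreover have "\<forall>i<n1+n2. agg_atom V E r (g i)" using f1 f2 unfolding g_def by auto
      ultimately show ?thesis by (intro exI[of _ "n1+n2"] exI[of _ g] conjI)
    qed
  qed
qed

theorem lemma4p18:
  fixes V E :: "'a set" and r :: "'a \<Rightarrow> 'a set" and a :: "'a \<Rightarrow> nat"
  assumes "is_graph V E r"
    and "a \<in> agglomerations V E r"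
    and "supp_acyclic V E r a"
  shows "(\<exists>l. agg_lengths V E r a = {l} \<and>
           int l = (\<Sum>v\<in>V. int (a v)) - (\<Sum>e\<in>E. int (a e))) \<and>
         card (agg_lengths V E r a) = 1"
proof -
  note G = assms(1)
  have acyc: "\<not> supp_has_cycle V E r a" using assms(3) by (simp add: supp_acyclic_def)
  have len: "int n = phi V E a" if nL: "n \<in> agg_lengths V E r a" for n
  proof -
    obtain f where f: "\<forall>i<n. agg_atom V E r (f i)" "a = (\<Sum>i<n. f i)"
      using nL unfolding agg_lengths_def by blast
    have "phi V E (f i) = 1" if i: "i < n" for i
    proof -
      have at: "agg_atom V E r (f i)" using f i by blast
      have le: "\<forall>x. f i x \<le> a x"
      proof
        fix x
        have "a x = (\<Sum>j<n. f j x)" using f(2) sum_fun_apply by metis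
        moreover have "f i x \<le> (\<Sum>j<n. f j x)" by (rule member_le_sum) (use i in auto)
        ultimately show "f i x \<le> a x" by simp
      qed
      have "\<not> supp_has_cycle V E r (f i)" using cycle_mono[OF le] acyc by blast
      then show ?thesis using M[OF G, of "f i"] at unfolding agg_atom_def by force
    qed
    then have "phi V E a = (\<Sum>i<n. 1)" using f(2) phi_sum by (metis (no_types, lifting) lessThan_iff sum.cong)
    then show ?thesis by simp
  qed
  obtain n0 :: nat and f0 where "\<forall>i<n0. agg_atom V E r (f0 i)" "a = (\<Sum>i<n0. f0 i)"
    using exists_decomp[OF G assms(2)] by blast
  then have n0: "n0 \<in> agg_lengths V E r a" unfolding agg_lengths_def by blast
  have eq: "agg_lengths V E r a = {n0}"
  proof (intro equalityI subsetI)
    fix n assume "n \<in> agg_lengths V E r a"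
    then have "int n = int n0" using len len[OF n0] by simp
    then show "n \<in> {n0}" by simp
  qed (use n0 in simp)
  show ?thesis using eq len[OF n0] unfolding phi_def by auto
qed

end
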